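(* Let $(R,\mathfrak{m})$ be a commutative Artinian local ring with identity, $\mathfrak{m}\neq0$ and $\mathfrak{m}^2=0$. For every integer $n\ge6$, $|R|>4$ if and only if $n-3\in L(x^n)$.
   Context: A nonunit polynomial in $R[x]$ is irreducible if in any factorization into two polynomials one factor is a unit of $R[x]$. A positive integer $k$ is a length of $f$ if $f$ is a product of $k$ irreducible polynomials of $R[x]$; $L(f)$ denotes the set of lengths of $f$. (Since $\mathfrak m\ne 0$, $|R|\ge 4$.) *)

theory Defs
  imports "HOL-Computational_Algebra.Polynomial" "HOL-Computational_Algebra.Factorial_Ring"
begin

definition ring_ideal :: "'a::comm_ring_1 set \<Rightarrow> bool" where
  "ring_ideal I \<longleftrightarrow> 0 \<in> I \<and> (\<forall>a\<in>I. \<forall>b\<in>I. a + b \<in> I) \<and> (\<forall>r. \<forall>a\<in>I. r * a \<in> I)"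

definition maximal_ideal :: "'a::comm_ring_1 set \<Rightarrow> bool" where
  "maximal_ideal M \<longleftrightarrow> ring_ideal M \<and> M \<noteq> UNIV \<and>
     (\<forall>I. ring_ideal I \<and> M \<subseteq> I \<longrightarrow> I = M \<or> I = UNIV)"

definition local_ring :: "'a::comm_ring_1 itself \<Rightarrow> bool" where
  "local_ring _ \<longleftrightarrow> (\<exists>!M::'a set. maximal_ideal M)"

definition artinian_ring :: "'a::comm_ring_1 itself \<Rightarrow> bool" where
  "artinian_ring _ \<longleftrightarrow> (\<forall>f::nat \<Rightarrow> 'a set. (\<forall>n. ring_ideal (f n)) \<and> (\<forall>n. f (Suc n) \<subseteq> f n)
      \<longrightarrow> (\<exists>N. \<forall>n\<ge>N. f n = f N))"

definition lengths :: "'a::comm_ring_1 poly \<Rightarrow> nat set" where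
  "lengths f = {k. k > 0 \<and> (\<exists>ps. length ps = k \<and> (\<forall>p\<in>set ps. irreducible p) \<and> prod_list ps = f)}"

end

theory Submission
  imports Defs
begin

locale sqz =
  fixes M :: "'a::comm_ring_1 set"
  assumes maxl: "maximal_ideal M"
    and sq: "\<forall>a\<in>M. \<forall>b\<in>M. a * b = 0"
begin

lemma idl: "ring_ideal M" using maxl unfolding maximal_ideal_def by blast

lemma M0: "0 \<in> M" using idl unfolding ring_ideal_def by blast
lemma Madd: "a \<in> M \<Longrightarrow> b \<in> M \<Longrightarrow> a + b \<in> M" using idl unfolding ring_ideal_def by blast
lemma Mmult: "a \<in> M \<Longrightarrow> r * a \<in> M" using idl unfolding ring_ideal_def by blast
lemma Mmult2: "a \<in> M \<Longrightarrow> a * r \<in> M" using Mmult[of a r] by (simp add: mult.commute)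
lemma Mneg: "a \<in> M \<Longrightarrow> - a \<in> M" using Mmult[of a "-1"] by simp
lemma Mdiff: "a \<in> M \<Longrightarrow> b \<in> M \<Longrightarrow> a - b \<in> M" using Madd[of a "-b"] Mneg[of b] by simp
lemma Msq: "a \<in> M \<Longrightarrow> b \<in> M \<Longrightarrow> a * b = 0" using sq by blast

lemma one_notin: "1 \<notin> M"
proof
  assume "1 \<in> M"
  then have "\<And>r. r \<in> M" using Mmult[of 1] by fastforce
  then show False using maxl unfolding maximal_ideal_def by auto
qed

lemma Msum: "finite A \<Longrightarrow> (\<And>i. i \<in> A \<Longrightarrow> f i \<in> M) \<Longrightarrow> sum f A \<in> M"
  by (induction A rule: finite_induct) (auto simp: M0 Madd)

lemma unit_of: assumes r: "r \<notin> M" shows "\<exists>s. r * s = 1"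
proof -
  define I where "I = {m + r * s | m s. m \<in> M}"
  have "ring_ideal I" unfolding ring_ideal_def
  proof (intro conjI ballI allI)
    have "0 + r * 0 \<in> I" unfolding I_def using M0 by blast
    then show "0 \<in> I" by simp
  next
    fix a b assume "a \<in> I" "b \<in> I"
    then obtain m1 s1 m2 s2 where "a = m1 + r * s1" "m1 \<in> M" "b = m2 + r * s2" "m2 \<in> M"
      unfolding I_def by blast
    then have "a + b = (m1 + m2) + r * (s1 + s2)" "m1 + m2 \<in> M" by (auto simp: algebra_simps Madd)
    then show "a + b \<in> I" unfolding I_def by blast
  next
    fix x a assume "a \<in> I"
    then obtain m s where "a = m + r * s" "m \<in> M" unfolding I_def by blast
    then have "x * a = x * m + r * (x * s)" "x * m \<in> M" by (auto simp: algebra_simps Mmult Mmult2)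
    then show "x * a \<in> I" unfolding I_def by blast
  qed
  moreover have "M \<subseteq> I"
  proof
    fix m assume "m \<in> M"
    then have "m + r * 0 \<in> I" unfolding I_def by blast
    then show "m \<in> I" by simp
  qed
  ultimately have "I = M \<or> I = UNIV" using maxl unfolding maximal_ideal_def by blast
  moreover have "r \<in> I"
  proof -
    have "0 + r * 1 \<in> I" unfolding I_def using M0 by blast
    then show ?thesis by simp
  qed
  ultimately have "1 \<in> I" using r by auto
  then obtain m s where ms: "1 = m + r * s" "m \<in> M" unfolding I_def by blast
  have rs: "r * s = 1 - m" using ms(1) by (simp add: algebra_simps)
  have "r * (s * (1 + m)) = (r * s) * (1 + m)" by (simp add: algebra_simps)
  also have "\<dots> = (1 - m) * (1 + m)" using rs by simp
  also have "\<dots> = 1 - m * m" by (simp add: algebra_simps)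
  also have "\<dots> = 1" using Msq[OF ms(2) ms(2)] by simp
  finally show ?thesis by blast
qed

lemma prime: assumes "a \<notin> M" "b \<notin> M" shows "a * b \<notin> M"
proof
  assume ab: "a * b \<in> M"
  obtain s where "a * s = 1" using unit_of assms(1) by blast
  have "s * (a * b) = (a * s) * b" by (simp add: algebra_simps)
  then have "b = s * (a * b)" using \<open>a * s = 1\<close> by simp
  then show False using Mmult[OF ab, of s] assms(2) by simp
qed

definition pure :: "nat \<Rightarrow> 'a poly \<Rightarrow> bool" where
  "pure a p \<longleftrightarrow> coeff p a \<notin> M \<and> (\<forall>i. i \<noteq> a \<longrightarrow> coeff p i \<in> M)"

lemma pure_unique: "pure a p \<Longrightarrow> pure b p \<Longrightarrow> a = b"
  unfolding pure_def by blast

lemma coeff_mult_pure: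
  assumes p: "pure a p" and q: "pure b q" and k: "k \<noteq> a + b"
  shows "coeff (p * q) k = (if a \<le> k then coeff p a * coeff q (k - a) else 0)
                          + (if b \<le> k then coeff p (k - b) * coeff q b else 0)"
proof -
  have t: "coeff p i * coeff q (k - i) = (if i = a then coeff p a * coeff q (k - i) else 0)
      + (if i = k - b then (if b \<le> k then coeff p i * coeff q b else 0) else 0)" if "i \<le> k" for i
  proof (cases "i = a")
    case True then show ?thesis using k that by auto
  next
    case False
    show ?thesis
    proof (cases "k - i = b")
      case True then show ?thesis using False that by auto
    next
      case F2: False
      have "coeff p i \<in> M" "coeff q (k - i) \<in> M" using p q False F2 unfolding pure_def by auto
      then show ?thesis using False F2 that Msq by auto
    qed
  qed
  have "coeff (p * q) k = (\<Sum>i\<le>k. coeff p i * coeff q (k - i))" by (rule coeff_mult)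
  also have "\<dots> = (\<Sum>i\<le>k. (if i = a then coeff p a * coeff q (k - i) else 0)
      + (if i = k - b then (if b \<le> k then coeff p i * coeff q b else 0) else 0))"
    using t by (intro sum.cong) auto
  also have "\<dots> = (if a \<le> k then coeff p a * coeff q (k - a) else 0)
                          + (if b \<le> k then coeff p (k - b) * coeff q b else 0)"
    by (simp add: sum.distrib)
  finally show ?thesis .
qed

lemma lead_mult:
  assumes p: "pure a p" and q: "pure b q"
  shows "coeff (p * q) (a + b) = coeff p a * coeff q b"
proof -
  have t: "coeff p i * coeff q (a + b - i) = (if i = a then coeff p a * coeff q b else 0)"
    if "i \<le> a + b" for i
  proof (cases "i = a")
    case True then show ?thesis by simp
  next
    case False
    then have "a + b - i \<noteq> b" using that by auto
    then have "coeff p i \<in> M" "coeff q (a + b - i) \<in> M" using p q False unfolding pure_def by auto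
    then show ?thesis using False Msq by auto
  qed
  have "coeff (p * q) (a + b) = (\<Sum>i\<le>a+b. coeff p i * coeff q (a + b - i))" by (rule coeff_mult)
  also have "\<dots> = (\<Sum>i\<le>a+b. (if i = a then coeff p a * coeff q b else 0))"
    using t by (intro sum.cong) auto
  also have "\<dots> = coeff p a * coeff q b" by simp
  finally show ?thesis .
qed

lemma pure_mult:
  assumes p: "pure a p" and q: "pure b q"
  shows "pure (a + b) (p * q)"
  unfolding pure_def
proof (intro conjI allI impI)
  show "coeff (p * q) (a + b) \<notin> M" using lead_mult[OF p q] prime p q unfolding pure_def by auto
next
  fix k assume k: "k \<noteq> a + b"
  have "coeff q (k - a) \<in> M" if "a \<le> k" using q k that unfolding pure_def by auto
  moreover have "coeff p (k - b) \<in> M" if "b \<le> k" using p k that unfolding pure_def by auto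
  ultimately show "coeff (p * q) k \<in> M"
    unfolding coeff_mult_pure[OF p q k] by (simp add: Madd Mmult Mmult2 M0)
qed

lemma coeff_mult_split:
  assumes "\<And>i. i \<le> k \<Longrightarrow> i \<noteq> a \<Longrightarrow> coeff p i * coeff q (k - i) \<in> M" and "a \<le> k"
  shows "coeff (p * q) k - coeff p a * coeff q (k - a) \<in> M"
proof -
  have "coeff (p * q) k = (\<Sum>i\<le>k. coeff p i * coeff q (k - i))" by (rule coeff_mult)
  also have "\<dots> = coeff p a * coeff q (k - a) + (\<Sum>i\<in>{..k} - {a}. coeff p i * coeff q (k - i))"
    using assms(2) by (subst sum.remove[of _ a]) auto
  finally have "coeff (p * q) k - coeff p a * coeff q (k - a) = (\<Sum>i\<in>{..k} - {a}. coeff p i * coeff q (k - i))"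
    by simp
  also have "\<dots> \<in> M" using assms(1) by (intro Msum) auto
  finally show ?thesis .
qed

lemma all_M_mult: "(\<And>i. coeff p i \<in> M) \<Longrightarrow> coeff (p * q) k \<in> M"
  unfolding coeff_mult by (intro Msum) (auto intro: Mmult2)

lemma pure_factor:
  assumes pq: "pure n (p * q)"
  shows "\<exists>a. pure a p"
proof -
  have fin: "finite {i. coeff r i \<notin> M}" for r :: "'a poly"
  proof (rule finite_subset[of _ "{..degree r}"])
    show "{i. coeff r i \<notin> M} \<subseteq> {..degree r}"
    proof
      fix x assume "x \<in> {i. coeff r i \<notin> M}"
      then have "coeff r x \<noteq> 0" using M0 by auto
      then show "x \<in> {..degree r}" by (simp add: le_degree)
    qed
  qed auto
  have ne_p: "{i. coeff p i \<notin> M} \<noteq> {}"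
  proof
    assume "{i. coeff p i \<notin> M} = {}"
    then have "coeff (p * q) n \<in> M" by (intro all_M_mult) auto
    then show False using pq unfolding pure_def by auto
  qed
  have ne_q: "{i. coeff q i \<notin> M} \<noteq> {}"
  proof
    assume "{i. coeff q i \<notin> M} = {}"
    then have "coeff (q * p) n \<in> M" by (intro all_M_mult) auto
    then show False using pq unfolding pure_def by (auto simp: mult.commute)
  qed
  define a where "a = Min {i. coeff p i \<notin> M}"
  define a' where "a' = Max {i. coeff p i \<notin> M}"
  define b where "b = Min {i. coeff q i \<notin> M}"
  define b' where "b' = Max {i. coeff q i \<notin> M}"
  have pa: "coeff p a \<notin> M" "coeff p a' \<notin> M" "coeff q b \<notin> M" "coeff q b' \<notin> M"
    using Min_in[OF fin ne_p] Max_in[OF fin ne_p] Min_in[OF fin ne_q] Max_in[OF fin ne_q]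
    unfolding a_def a'_def b_def b'_def by auto
  have lo_p: "coeff p i \<in> M" if "i < a" for i
    using Min_le[OF fin, of i p] that unfolding a_def by force
  have hi_p: "coeff p i \<in> M" if "i > a'" for i
    using Max_ge[OF fin, of i p] that unfolding a'_def by force
  have lo_q: "coeff q i \<in> M" if "i < b" for i
    using Min_le[OF fin, of i q] that unfolding b_def by force
  have hi_q: "coeff q i \<in> M" if "i > b'" for i
    using Max_ge[OF fin, of i q] that unfolding b'_def by force
  have "a \<le> a'" "b \<le> b'" using pa hi_p hi_q by (meson not_le)+
  have c1: "coeff (p * q) (a + b) \<notin> M"
  proof
    assume c: "coeff (p * q) (a + b) \<in> M"
    have "coeff (p * q) (a + b) - coeff p a * coeff q (a + b - a) \<in> M"
    proof (rule coeff_mult_split)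
      fix i assume i: "i \<le> a + b" "i \<noteq> a"
      show "coeff p i * coeff q (a + b - i) \<in> M"
      proof (cases "i < a")
        case True then show ?thesis using lo_p Mmult2 by blast
      next
        case False then have "a + b - i < b" using i by auto
        then show ?thesis using lo_q Mmult by blast
      qed
    qed simp
    then have "coeff p a * coeff q b \<in> M" using Mdiff[OF c] by force
    then show False using prime pa by blast
  qed
  have c2: "coeff (p * q) (a' + b') \<notin> M"
  proof
    assume c: "coeff (p * q) (a' + b') \<in> M"
    have "coeff (p * q) (a' + b') - coeff p a' * coeff q (a' + b' - a') \<in> M"
    proof (rule coeff_mult_split)
      fix i assume i: "i \<le> a' + b'" "i \<noteq> a'"
      show "coeff p i * coeff q (a' + b' - i) \<in> M"
      proof (cases "i > a'")
        case True then show ?thesis using hi_p Mmult2 by blast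
      next
        case False then have "a' + b' - i > b'" using i by auto
        then show ?thesis using hi_q Mmult by blast
      qed
    qed simp
    then have "coeff p a' * coeff q b' \<in> M" using Mdiff[OF c] by force
    then show False using prime pa by blast
  qed
  have "a + b = n" "a' + b' = n" using c1 c2 pq unfolding pure_def by auto
  then have "a = a'" using \<open>a \<le> a'\<close> \<open>b \<le> b'\<close> by linarith
  then have "pure a p" unfolding pure_def using pa lo_p hi_p by (metis linorder_neqE_nat)
  then show ?thesis by blast
qed

lemma pure_factor_list:
  assumes "pure n (prod_list ps)" "p \<in> set ps"
  shows "\<exists>a. pure a p"
proof -
  obtain xs ys where ps: "ps = xs @ p # ys" using split_list[OF assms(2)] by blast
  have "prod_list ps = prod_list xs * (p * prod_list ys)" unfolding ps by simp
  also have "\<dots> = p * (prod_list xs * prod_list ys)" by (rule mult.left_commute)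
  finally have "pure n (p * (prod_list xs * prod_list ys))" using assms(1) by simp
  then show ?thesis by (rule pure_factor)
qed

lemma unit_coeff0: assumes "(p dvd 1)" shows "coeff p 0 \<notin> M"
proof
  assume c: "coeff p 0 \<in> M"
  obtain k where k: "1 = p * k" using assms by (auto elim: dvdE)
  have "coeff (p * k) 0 = 1" by (simp add: k[symmetric])
  then have "coeff p 0 * poly k 0 = 1" by (simp add: poly_0_coeff_0 coeff_mult)
  then show False using Mmult2[OF c, of "poly k 0"] one_notin by simp
qed

lemma pure0_unit: assumes p: "pure 0 p" shows "(p dvd 1)"
proof -
  obtain s where s: "coeff p 0 * s = 1" using unit_of p unfolding pure_def by blast
  define h where "h = p - [:coeff p 0:]"
  have hM: "coeff h i \<in> M" for i
    using p M0 unfolding h_def pure_def by (cases i) auto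
  have hh: "h * h = 0"
  proof (rule poly_eqI)
    fix k show "coeff (h * h) k = coeff 0 k"
      unfolding coeff_mult by (simp add: Msq hM)
  qed
  have "p * ([:s:] - [:s * s:] * h) = ([:coeff p 0:] + h) * ([:s:] - [:s * s:] * h)"
    unfolding h_def by simp
  also have "\<dots> = [:coeff p 0 * s:] + [:s:] * h - [:coeff p 0 * s * s:] * h - [:s * s:] * (h * h)"
    by (simp add: algebra_simps)
  also have "\<dots> = 1" using s hh by (simp add: one_pCons)
  finally show ?thesis by (metis dvdI)
qed

lemma pure_wt_pos: assumes "irreducible p" "pure a p" shows "a \<ge> 1"
proof (rule ccontr)
  assume "\<not> a \<ge> 1"
  then have "a = 0" by simp
  then have "pure 0 p" using assms(2) by simp
  then have "p dvd 1" by (rule pure0_unit)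
  then show False using assms(1) unfolding irreducible_def by blast
qed

lemma irr_coeff0:
  assumes irr: "irreducible p" and p: "pure a p" and a: "a \<ge> 2"
  shows "coeff p 0 \<noteq> 0"
proof
  assume c0: "coeff p 0 = 0"
  obtain c q where pc: "p = pCons c q" by (cases p)
  then have "c = 0" using c0 by simp
  then have pq: "p = [:0, 1:] * q" using pc by simp
  have H: "\<And>x y. p = x * y \<Longrightarrow> x dvd 1 \<or> y dvd 1" using irr unfolding irreducible_def by blast
  have "(([:0, 1:] :: 'a poly) dvd 1) \<or> (q dvd 1)" using H[of "[:0, 1:]" q] pq by simp
  moreover have "coeff [:0, 1:] 0 \<in> M" using M0 by simp
  moreover have "coeff q 0 \<in> M"
  proof -
    have "coeff q 0 = coeff p 1" using pc by simp
    moreover have "coeff p 1 \<in> M" using p a unfolding pure_def by auto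
    ultimately show ?thesis by simp
  qed
  ultimately show False using unit_coeff0 by blast
qed

lemma irr_pure:
  assumes p: "pure a p" and a: "a \<ge> 1" and c: "a = 1 \<or> coeff p 0 \<noteq> 0"
  shows "irreducible p"
  unfolding irreducible_def
proof (intro conjI allI impI)
  show "p \<noteq> 0" using p M0 unfolding pure_def by auto
  have "coeff p 0 \<in> M" using p a unfolding pure_def by auto
  then show "\<not> (p dvd 1)" using unit_coeff0 by blast
next
  fix x y assume xy: "p = x * y"
  obtain \<alpha> where x: "pure \<alpha> x" using pure_factor p xy by blast
  obtain \<beta> where y: "pure \<beta> y" using pure_factor[of a y x] p xy by (auto simp: mult.commute)
  have "pure (\<alpha> + \<beta>) p" using pure_mult[OF x y] xy by simp
  then have ab: "\<alpha> + \<beta> = a" using pure_unique p by blast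
  show "(x dvd 1) \<or> (y dvd 1)"
  proof (cases "\<alpha> = 0 \<or> \<beta> = 0")
    case True then show ?thesis using pure0_unit x y by auto
  next
    case False
    then have "a \<noteq> 1" using ab by auto
    then have "coeff p 0 \<noteq> 0" using c by auto
    moreover have "coeff (x * y) 0 = 0" using coeff_mult_pure[OF x y, of 0] False by auto
    ultimately show ?thesis using xy by simp
  qed
qed


definition wt :: "'a poly \<Rightarrow> nat" where "wt p = (LEAST a. coeff p a \<notin> M)"

lemma wt_pure: "pure a p \<Longrightarrow> wt p = a"
  unfolding wt_def pure_def by (rule Least_equality) (auto simp: not_le[symmetric] intro: ccontr)

lemma pure_wt: "pure a p \<Longrightarrow> pure (wt p) p"
  using wt_pure by simp

definition phi :: "nat \<Rightarrow> 'a poly \<Rightarrow> 'a" where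
  "phi e p = (if e \<le> wt p then coeff p (wt p - e) else 0)"

lemma prod_pure:
  "(\<forall>p\<in>set ps. \<exists>a. pure a p) \<Longrightarrow> pure (sum_list (map wt ps)) (prod_list ps)"
proof (induction ps)
  case Nil
  show ?case unfolding pure_def using one_notin M0 by (auto simp: coeff_1)
next
  case (Cons p ps)
  then obtain a where "pure a p" by auto
  then have "pure (wt p) p" by (rule pure_wt)
  then show ?case using pure_mult Cons by auto
qed

lemma phi_mult:
  assumes absorb: "\<And>r m. r \<notin> M \<Longrightarrow> m \<in> M \<Longrightarrow> r * m = m"
    and p: "pure a p" and q: "pure b q" and e: "e \<ge> 1"
  shows "phi e (p * q) = phi e p + phi e q"
proof -
  have w: "wt (p * q) = a + b" "wt p = a" "wt q = b"
    using wt_pure pure_mult[OF p q] p q by auto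
  show ?thesis
  proof (cases "e \<le> a + b")
    case False
    then show ?thesis unfolding phi_def w by auto
  next
    case True
    note eab = True
    have k: "a + b - e \<noteq> a + b" using True e by auto
    have c1: "(if a \<le> a + b - e then coeff p a * coeff q (a + b - e - a) else 0) = phi e q"
    proof (cases "e \<le> b")
      case True
      have "coeff q (b - e) \<in> M" using q e True unfolding pure_def by auto
      moreover have "coeff p a \<notin> M" using p unfolding pure_def by auto
      ultimately show ?thesis using True absorb unfolding phi_def w
        by (simp add: algebra_simps)
    qed (use eab in \<open>auto simp: phi_def w\<close>)
    have c2: "(if b \<le> a + b - e then coeff p (a + b - e - b) * coeff q b else 0) = phi e p"
    proof (cases "e \<le> a")
      case True
      have "coeff p (a - e) \<in> M" using p e True unfolding pure_def by auto
      moreover have "coeff q b \<notin> M" using q unfolding pure_def by auto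
      ultimately show ?thesis using True absorb unfolding phi_def w
        by (simp add: algebra_simps mult.commute[of "coeff p _"])
    qed (use eab in \<open>auto simp: phi_def w\<close>)
    show ?thesis unfolding phi_def[of e "p * q"] w using True coeff_mult_pure[OF p q k] c1 c2
      by (simp add: add.commute)
  qed
qed

lemma phi_prod:
  assumes absorb: "\<And>r m. r \<notin> M \<Longrightarrow> m \<in> M \<Longrightarrow> r * m = m" and e: "e \<ge> 1"
  shows "(\<forall>p\<in>set ps. \<exists>a. pure a p) \<Longrightarrow> phi e (prod_list ps) = sum_list (map (phi e) ps)"
proof (induction ps)
  case Nil
  have "wt 1 = 0" using wt_pure[of 0 1] one_notin M0 unfolding pure_def by (auto simp: coeff_1)
  then show ?case using e unfolding phi_def by auto
next
  case (Cons p ps)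
  then obtain a where "pure a p" by auto
  then show ?case using phi_mult[OF absorb _ prod_pure e] Cons by auto
qed

end

lemma sum_list_minus1:
  "(\<forall>p\<in>set ps. f p \<ge> (1::nat)) \<Longrightarrow> sum_list (map (\<lambda>p. f p - 1) ps) + length ps = sum_list (map f ps)"
  by (induction ps) auto

lemma sum_list_parity:
  fixes t :: "'a::comm_ring_1"
  assumes "t + t = 0"
  shows "sum_list (map (\<lambda>p. if P p then t else 0) ps)
         = (if even (sum_list (map (\<lambda>p. if P p then 1 else 0::nat) ps)) then 0 else t)"
  by (induction ps) (auto simp: assms)

lemma x_pow_monom: "[:0, 1:] ^ n = monom 1 n"
  by (simp add: monom_altdef)

lemma x_pow_coeff: "coeff ([:0, 1:] ^ n) i = (if i = n then 1 else 0)"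
  unfolding x_pow_monom by (simp add: coeff_monom)

lemma quad_eq: "[:c, 0, 1:] = [:c:] + [:0, 1:] ^ 2"
  unfolding x_pow_monom
  by (intro poly_eqI) (auto simp: coeff_monom coeff_pCons split: nat.split)

lemma ring3: "((C1::'b::comm_ring_1) + Y) * (C2 + Y) * (C3 + Y) = C1 * C2 * C3 + (C1 * C2 + C1 * C3 + C2 * C3) * Y
      + (C1 + C2 + C3) * Y * Y + Y * Y * Y"
  by (simp add: algebra_simps)

lemma list3: "prod_list ([a, b, c] @ replicate k x) = a * b * c * (x::'b::comm_monoid_mult) ^ k"
  by (simp add: mult.assoc)

lemma quad_prod:
  fixes c1 c2 c3 :: "'a::comm_ring_1"
  assumes "c1 + c2 + c3 = 0" "c1 * c2 = 0" "c1 * c3 = 0" "c2 * c3 = 0"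
  shows "[:c1, 0, 1:] * [:c2, 0, 1:] * [:c3, 0, 1:] = [:0, 1:] ^ 6"
proof -
  define Y :: "'a poly" where "Y = [:0, 1:] ^ 2"
  have "[:c1, 0, 1:] * [:c2, 0, 1:] * [:c3, 0, 1:] = ([:c1:] + Y) * ([:c2:] + Y) * ([:c3:] + Y)"
    unfolding Y_def by (simp only: quad_eq)
  also have "\<dots> = [:c1:] * [:c2:] * [:c3:] + ([:c1:] * [:c2:] + [:c1:] * [:c3:] + [:c2:] * [:c3:]) * Y
      + ([:c1:] + [:c2:] + [:c3:]) * Y * Y + Y * Y * Y"
    by (rule ring3)
  also have "\<dots> = Y * Y * Y"
  proof -
    have "c2 * c1 = 0" "c3 * c1 = 0" "c3 * c2 = 0" using assms by (simp_all add: mult.commute)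
    then show ?thesis using assms by (simp add: mult.assoc)
  qed
  also have "\<dots> = [:0, 1:] ^ 6" unfolding Y_def by (simp flip: power_add)
  finally show ?thesis .
qed


theorem proposition4p11:
  fixes M :: "'a::comm_ring_1 set" and n :: nat
  assumes "artinian_ring TYPE('a)"
    and "local_ring TYPE('a)"
    and "maximal_ideal M"
    and "M \<noteq> {0}"
    and "\<forall>a\<in>M. \<forall>b\<in>M. a * b = 0"
    and "n \<ge> 6"
  shows "(infinite (UNIV :: 'a set) \<or> card (UNIV :: 'a set) > 4) \<longleftrightarrow>
         n - 3 \<in> lengths ([:0, 1:] ^ n :: 'a poly)"
proof -
  interpret sqz M using assms(3,5) by unfold_locales
  obtain t where t: "t \<in> M" "t \<noteq> 0" using assms(4) M0 by blast
  have notunit_ann: "r \<in> M" if "r * t = 0" for r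
  proof (rule ccontr)
    assume "r \<notin> M"
    then obtain s where s: "r * s = 1" using unit_of by blast
    have "t = (r * s) * t" using s by simp
    also have "\<dots> = s * (r * t)" by (simp add: algebra_simps)
    finally show False using that t by simp
  qed
  have one_t: "1 + t \<notin> M"
  proof
    assume "1 + t \<in> M"
    then have "(1 + t) - t \<in> M" using Mdiff t by blast
    then show False using one_notin by simp
  qed
  define X :: "'a poly" where "X = [:0, 1:]"
  have pureX: "pure 1 X" unfolding X_def pure_def using one_notin M0
    by (auto simp: coeff_pCons split: nat.split)
  have pureXn: "pure n (X ^ n)" unfolding X_def pure_def using one_notin M0
    by (auto simp: x_pow_coeff)
  show ?thesis
  proof
    assume big: "infinite (UNIV :: 'a set) \<or> card (UNIV :: 'a set) > 4"
    have "\<exists>s\<in>M. s \<noteq> 0 \<and> s \<noteq> t"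
    proof (rule ccontr)
      assume "\<not> (\<exists>s\<in>M. s \<noteq> 0 \<and> s \<noteq> t)"
      then have Mt: "\<And>m. m \<in> M \<Longrightarrow> m = 0 \<or> m = t" by auto
      have sub: "(UNIV :: 'a set) \<subseteq> set [0, t, 1, 1 + t]"
      proof
        fix r :: 'a
        have "r * t \<in> M" by (rule Mmult[OF t(1)])
        then consider "r * t = 0" | "r * t = t" using Mt by blast
        then show "r \<in> set [0, t, 1, 1 + t]"
        proof cases
          case 1
          then show ?thesis using notunit_ann Mt by auto
        next
          case 2
          then have "(r - 1) * t = 0" by (simp add: algebra_simps)
          then have "r - 1 = 0 \<or> r - 1 = t" using notunit_ann Mt by blast
          then show ?thesis by (auto simp: algebra_simps)
        qed
      qed
      then have "finite (UNIV :: 'a set)" using finite_subset by blast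
      moreover have "card (UNIV :: 'a set) \<le> 4"
        using card_mono[OF _ sub] card_length[of "[0, t, 1, 1 + t]"] by simp
      ultimately show False using big by simp
    qed
    then obtain s where s: "s \<in> M" "s \<noteq> 0" "s \<noteq> t" by blast
    have "\<exists>c1 c2 c3. c1 \<in> M \<and> c2 \<in> M \<and> c3 \<in> M \<and> c1 \<noteq> 0 \<and> c2 \<noteq> 0 \<and> c3 \<noteq> 0 \<and> c1 + c2 + c3 = 0"
    proof (cases "t + s = 0")
      case True
      then have "t + t \<noteq> 0" using s(3) by (metis add.commute add_left_imp_eq)
      moreover have "- (t + t) \<in> M" using Mneg Madd t by blast
      ultimately show ?thesis using t by (intro exI[of _ t] exI[of _ "- (t + t)"]) auto
    next
      case False
      moreover have "- (t + s) \<in> M" using Mneg Madd t s by blast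
      ultimately show ?thesis using t s by (intro exI[of _ t] exI[of _ s] exI[of _ "- (t + s)"]) auto
    qed
    then obtain c1 c2 c3 where c: "c1 \<in> M" "c2 \<in> M" "c3 \<in> M" "c1 \<noteq> 0" "c2 \<noteq> 0" "c3 \<noteq> 0"
      "c1 + c2 + c3 = 0" by blast
    have pq: "pure 2 [:c, 0, 1:]" if "c \<in> M" for c
      unfolding pure_def using one_notin M0 that
      by (auto simp: coeff_pCons split: nat.split)
    have irrq: "irreducible [:c, 0, 1:]" if "c \<in> M" "c \<noteq> 0" for c
      using irr_pure[OF pq[OF that(1)]] that by simp
    have irrX: "irreducible X" using irr_pure[OF pureX] by simp
    define ps where "ps = [[:c1, 0, 1:], [:c2, 0, 1:], [:c3, 0, 1:]] @ replicate (n - 6) X"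
    have "prod_list ps = [:c1, 0, 1:] * [:c2, 0, 1:] * [:c3, 0, 1:] * X ^ (n - 6)"
      unfolding ps_def by (rule list3)
    also have "\<dots> = X ^ 6 * X ^ (n - 6)"
      using quad_prod[of c1 c2 c3] c Msq unfolding X_def by simp
    also have "\<dots> = X ^ n" using assms(6) by (simp flip: power_add)
    finally have "prod_list ps = X ^ n" .
    moreover have "length ps = n - 3" unfolding ps_def using assms(6) by simp
    moreover have "\<forall>p\<in>set ps. irreducible p" unfolding ps_def using irrq c irrX by auto
    ultimately show "n - 3 \<in> lengths ([:0, 1:] ^ n :: 'a poly)"
      unfolding lengths_def X_def using assms(6) by auto
  next
    assume "n - 3 \<in> lengths ([:0, 1:] ^ n :: 'a poly)"
    then obtain ps where ps: "length ps = n - 3" "\<forall>p\<in>set ps. irreducible p" "prod_list ps = X ^ n"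
      unfolding lengths_def X_def by blast
    show "infinite (UNIV :: 'a set) \<or> card (UNIV :: 'a set) > 4"
    proof (rule ccontr)
      assume "\<not> ?thesis"
      then have fin: "finite (UNIV :: 'a set)" "card (UNIV :: 'a set) \<le> 4" by auto
      have Mt: "m = 0 \<or> m = t" if "m \<in> M" for m
      proof (rule ccontr)
        assume m: "\<not> (m = 0 \<or> m = t)"
        have "1 \<noteq> 1 + t" using t by simp
        moreover have "x \<noteq> 1" "x \<noteq> 1 + t" if "x \<in> M" for x
          using that one_notin one_t by auto
        ultimately have "card {0, t, m, 1, 1 + t} = 5"
          using m t \<open>m \<in> M\<close> M0 by auto
        moreover have "card {0, t, m, 1, 1 + t} \<le> card (UNIV :: 'a set)"
          using fin by (intro card_mono) auto
        ultimately show False using fin by simp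
      qed
      have tt: "t + t = 0"
      proof -
        have "t + t \<in> M" using Madd t by blast
        moreover have "t + t \<noteq> t" using t by simp
        ultimately show ?thesis using Mt by blast
      qed
      have absorb: "r * m = m" if "r \<notin> M" "m \<in> M" for r m
      proof -
        have "r * t \<noteq> 0" using notunit_ann that(1) by blast
        moreover have "r * t \<in> M" using Mmult t by blast
        ultimately have "r * t = t" using Mt by blast
        then show ?thesis using Mt[OF that(2)] by auto
      qed
      have allpure: "\<forall>p\<in>set ps. \<exists>a. pure a p"
        using pure_factor_list[of n ps] ps(3) pureXn by auto
      have pw: "pure (wt p) p" if "p \<in> set ps" for p
        using allpure that pure_wt by blast
      have w1: "wt p \<ge> 1" if "p \<in> set ps" for p
        using pure_wt_pos pw that ps(2) by blast
      have sumw: "sum_list (map wt ps) = n"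
        using prod_pure[OF allpure] ps(3) pureXn pure_unique by metis
      have sum3: "sum_list (map (\<lambda>p. wt p - 1) ps) = 3"
        using sum_list_minus1[of ps wt] w1 sumw ps(1) assms(6) by auto
      have ne: "ps \<noteq> []" using ps(1) assms(6) by auto
      define A where "A = Max (wt ` set ps)"
      have leA: "wt p \<le> A" if "p \<in> set ps" for p unfolding A_def using that by simp
      have "A \<in> wt ` set ps" unfolding A_def using ne by (intro Max_in) auto
      then obtain p0 where p0: "p0 \<in> set ps" "wt p0 = A" by blast
      define c where "c = sum_list (map (\<lambda>p. if wt p = A then 1 else 0::nat) ps)"
      have c1: "c \<ge> 1"
        unfolding c_def using member_le_sum_list[of 1 "map (\<lambda>p. if wt p = A then 1 else 0::nat) ps"] p0
        by force
      have "(A - 1) * c = sum_list (map (\<lambda>p. (A - 1) * (if wt p = A then 1 else 0::nat)) ps)"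
        unfolding c_def by (simp add: sum_list_const_mult)
      also have "\<dots> \<le> sum_list (map (\<lambda>p. wt p - 1) ps)"
        by (rule sum_list_mono) auto
      finally have Ac: "(A - 1) * c \<le> 3" using sum3 by simp
      have A2: "A \<ge> 2"
      proof (rule ccontr)
        assume "\<not> A \<ge> 2"
        then have "\<forall>p\<in>set ps. wt p - 1 = 0" using leA by fastforce
        then have "sum_list (map (\<lambda>p. wt p - 1) ps) \<le> sum_list (map (\<lambda>p. 0::nat) ps)"
          by (intro sum_list_mono) auto
        then have "sum_list (map (\<lambda>p. wt p - 1) ps) = 0" by simp
        then show False using sum3 by linarith
      qed
      have codd: "odd c"
      proof (cases "A = 2")
        case True
        have "sum_list (map (\<lambda>p. wt p - 1) ps) = c" unfolding c_def
        proof (rule arg_cong[where f = sum_list], rule map_cong)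
          fix p assume "p \<in> set ps"
          then have "wt p = 1 \<or> wt p = 2" using leA w1 True by fastforce
          then show "wt p - 1 = (if wt p = A then 1 else 0)" using True by auto
        qed simp
        then show ?thesis using sum3 by simp
      next
        case False
        then have "A - 1 \<ge> 2" using A2 by simp
        then have "2 * c \<le> 3" using Ac by (meson dual_order.trans mult_le_mono1)
        then have "c = 1" using c1 by simp
        then show ?thesis by simp
      qed
      have "phi A (X ^ n) = 0"
        using wt_pure[OF pureXn] A2 unfolding phi_def X_def by (auto simp: x_pow_coeff)
      moreover have "phi A (X ^ n) = sum_list (map (phi A) ps)"
        using phi_prod[OF absorb _ allpure, of A] ps(3) A2 by simp
      moreover have "sum_list (map (phi A) ps) = sum_list (map (\<lambda>p. if wt p = A then t else 0) ps)"
      proof (rule arg_cong[where f = sum_list], rule map_cong)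
        fix p assume p: "p \<in> set ps"
        show "phi A p = (if wt p = A then t else 0)"
        proof (cases "wt p = A")
          case True
          have "coeff p 0 \<noteq> 0" using irr_coeff0[OF _ pw[OF p]] ps(2) p A2 True by auto
          moreover have "coeff p 0 \<in> M" using pw[OF p] A2 True unfolding pure_def by auto
          ultimately show ?thesis using Mt True unfolding phi_def by auto
        next
          case False
          then have "wt p < A" using leA p by fastforce
          then show ?thesis using False unfolding phi_def by auto
        qed
      qed simp
      moreover have "\<dots> = t" using sum_list_parity[OF tt, of "\<lambda>p. wt p = A" ps] codd
        unfolding c_def by simp
      ultimately show False using t by simp
    qed
  qed
qed

end
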